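(* Let $G$ be a graph, $K$ a clique of $G$, and $x$ a vertex not in $K$ which is either a vertex of $G$ adjacent to no vertex of $K$ or a new vertex not in $G$, such that all vertices of $K$ have the same closed neighborhood in $G-x$. For $0\le i\le |K|$, let $G_i$ be the graph obtained from $G$ (adding $x$ as a new vertex if it is not in $G$) by joining $x$ by edges to exactly $i$ vertices of $K$. Then \[ (i-j)X_{G_k}+(j-k)X_{G_i}+(k-i)X_{G_j}=0\qquad\text{for any } 0\le i\le j\le k\le |K|. \]
   Context: All graphs are finite simple graphs. The chromatic symmetric function of a graph $G$ is $X_G=\sum_{\kappa}\prod_{v\in V(G)}x_{\kappa(v)}$, where $\kappa$ ranges over proper colorings $\kappa:V(G)\to\{1,2,\dots\}$. A clique is a set of pairwise adjacent vertices. The closed neighborhood of a vertex is the set consisting of the vertex and all vertices adjacent to it. *)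

theory Defs
  imports Main
begin

definition simple_graph :: "'a set \<Rightarrow> 'a set set \<Rightarrow> bool" where
  "simple_graph V E \<longleftrightarrow> finite V \<and>
     (\<forall>e\<in>E. \<exists>u v. e = {u, v} \<and> u \<noteq> v \<and> u \<in> V \<and> v \<in> V)"

definition is_clique :: "'a set \<Rightarrow> 'a set set \<Rightarrow> 'a set \<Rightarrow> bool" where
  "is_clique V E K \<longleftrightarrow> K \<subseteq> V \<and> (\<forall>u\<in>K. \<forall>v\<in>K. u \<noteq> v \<longrightarrow> {u, v} \<in> E)"

definition closed_nbhd :: "'a set \<Rightarrow> 'a set set \<Rightarrow> 'a \<Rightarrow> 'a set" where
  "closed_nbhd V E v = {v} \<union> {u \<in> V. {u, v} \<in> E}"

definition del_vertex_edges :: "'a set set \<Rightarrow> 'a \<Rightarrow> 'a set set" where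
  "del_vertex_edges E x = {e \<in> E. x \<notin> e}"

text \<open>Proper colourings with colours in {1,2,...}; the colouring is taken to be
  0 outside V so that colourings of V correspond bijectively to such functions.\<close>
definition proper_coloring :: "'a set \<Rightarrow> 'a set set \<Rightarrow> ('a \<Rightarrow> nat) \<Rightarrow> bool" where
  "proper_coloring V E \<kappa> \<longleftrightarrow>
     (\<forall>v. v \<notin> V \<longrightarrow> \<kappa> v = 0) \<and> (\<forall>v\<in>V. 1 \<le> \<kappa> v) \<and>
     (\<forall>u v. {u, v} \<in> E \<longrightarrow> \<kappa> u \<noteq> \<kappa> v)"

text \<open>The chromatic symmetric function X_G = sum over proper colourings kappa of
  prod_v x_(kappa v), represented by its coefficients: the coefficient of the
  monomial prod_c x_c^(alpha c) is the number of proper colourings kappa with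
  exactly alpha c vertices of colour c, for every colour c.\<close>
definition chrom_coeff :: "'a set \<Rightarrow> 'a set set \<Rightarrow> (nat \<Rightarrow> nat) \<Rightarrow> nat" where
  "chrom_coeff V E \<alpha> =
     card {\<kappa>. proper_coloring V E \<kappa> \<and> (\<forall>c. card {v \<in> V. \<kappa> v = c} = \<alpha> c)}"

definition join_edges :: "'a set set \<Rightarrow> 'a \<Rightarrow> 'a set \<Rightarrow> 'a set set" where
  "join_edges E x S = E \<union> {{x, v} | v. v \<in> S}"

end

theory Submission imports Defs begin

definition sw :: "'a \<Rightarrow> 'a \<Rightarrow> 'a \<Rightarrow> 'a" where
  "sw u v w = (if w = u then v else if w = v then u else w)"

lemma sw_sw[simp]: "sw u v (sw u v w) = w"
  by (auto simp: sw_def)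

lemma inj_sw: "inj (sw u v)"
  by (metis injI sw_sw)

definition ctyp :: "'a set \<Rightarrow> ('a \<Rightarrow> nat) \<Rightarrow> (nat \<Rightarrow> nat) \<Rightarrow> bool" where
  "ctyp T \<kappa> \<alpha> \<longleftrightarrow> (\<forall>c. card {w \<in> T. \<kappa> w = c} = \<alpha> c)"

lemma fin_col:
  assumes "finite T"
  shows "finite {\<kappa>. proper_coloring T E \<kappa> \<and> ctyp T \<kappa> \<alpha>}" (is "finite ?A")
proof (cases "?A = {}")
  case True then show ?thesis by (simp only: finite.emptyI)
next
  case False
  then obtain \<kappa>0 where k0: "\<kappa>0 \<in> ?A" by blast
  have "?A \<subseteq> {f. \<forall>w. (w \<in> T \<longrightarrow> f w \<in> \<kappa>0 ` T) \<and> (w \<notin> T \<longrightarrow> f w = 0)}"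
  proof (safe)
    fix \<kappa> w assume p: "proper_coloring T E \<kappa>" and t: "ctyp T \<kappa> \<alpha>"
    show "w \<notin> T \<Longrightarrow> \<kappa> w = 0" using p by (simp add: proper_coloring_def)
    assume w: "w \<in> T"
    have "card {w' \<in> T. \<kappa> w' = \<kappa> w} > 0"
      using w assms by (subst card_gt_0_iff) auto
    then have "card {w' \<in> T. \<kappa>0 w' = \<kappa> w} > 0"
      using t k0 by (simp add: ctyp_def)
    then obtain w' where "w' \<in> T" "\<kappa>0 w' = \<kappa> w"
    proof -
      have "{w' \<in> T. \<kappa>0 w' = \<kappa> w} \<noteq> {}" using \<open>card {w' \<in> T. \<kappa>0 w' = \<kappa> w} > 0\<close> by force
      then show ?thesis using that by blast
    qed
    then show "\<kappa> w \<in> \<kappa>0 ` T" by force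
  qed
  moreover have "finite {f. \<forall>w. (w \<in> T \<longrightarrow> f w \<in> \<kappa>0 ` T) \<and> (w \<notin> T \<longrightarrow> f w = (0::nat))}"
    using assms by (intro finite_set_of_finite_funs) auto
  ultimately show ?thesis by (rule finite_subset)
qed

lemma join_proper:
  assumes "S \<subseteq> T" "x \<in> T"
  shows "proper_coloring T (join_edges E x S) \<kappa> \<longleftrightarrow>
     proper_coloring T E \<kappa> \<and> (\<forall>v\<in>S. \<kappa> x \<noteq> \<kappa> v)"
proof -
  have "(\<forall>a b. {a, b} \<in> join_edges E x S \<longrightarrow> \<kappa> a \<noteq> \<kappa> b) \<longleftrightarrow>
        (\<forall>a b. {a, b} \<in> E \<longrightarrow> \<kappa> a \<noteq> \<kappa> b) \<and> (\<forall>v\<in>S. \<kappa> x \<noteq> \<kappa> v)"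
  proof (intro iffI conjI ballI allI impI)
    fix a b assume h: "\<forall>a b. {a, b} \<in> join_edges E x S \<longrightarrow> \<kappa> a \<noteq> \<kappa> b"
    { assume "{a,b} \<in> E" then show "\<kappa> a \<noteq> \<kappa> b" using h by (auto simp: join_edges_def) }
  next
    fix v assume h: "\<forall>a b. {a, b} \<in> join_edges E x S \<longrightarrow> \<kappa> a \<noteq> \<kappa> b" and "v \<in> S"
    then show "\<kappa> x \<noteq> \<kappa> v" by (auto simp: join_edges_def)
  next
    fix a b assume h: "(\<forall>a b. {a, b} \<in> E \<longrightarrow> \<kappa> a \<noteq> \<kappa> b) \<and> (\<forall>v\<in>S. \<kappa> x \<noteq> \<kappa> v)"
      and e: "{a, b} \<in> join_edges E x S"
    show "\<kappa> a \<noteq> \<kappa> b"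
    proof (cases "{a,b} \<in> E")
      case True then show ?thesis using h by blast
    next
      case False
      then obtain v where "v \<in> S" "{a,b} = {x,v}" using e by (auto simp: join_edges_def)
      then show ?thesis using h by (auto simp: doubleton_eq_iff)
    qed
  qed
  then show ?thesis unfolding proper_coloring_def by blast
qed

lemma swap_edge:
  assumes twin: "\<And>w. w \<noteq> u \<Longrightarrow> w \<noteq> v \<Longrightarrow> ({w,u} \<in> E \<longleftrightarrow> {w,v} \<in> E)"
    and uv: "{u,v} \<in> E \<or> u = v"
    and noloop: "\<And>w. {w} \<notin> E"
    and e: "{a,b} \<in> E"
  shows "{sw u v a, sw u v b} \<in> E"
proof (cases "u = v")
  case True
  then have "sw u v = id" by (auto simp: sw_def fun_eq_iff)
  then show ?thesis using e by simp
next
  case False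
  then have uvE: "{u,v} \<in> E" using uv by blast
  have ab: "a \<noteq> b" using e noloop by force
  have c: "{b,a} \<in> E" using e by (simp add: insert_commute)
  consider "a = u" "b = v" | "a = v" "b = u" | "a = u" "b \<noteq> u" "b \<noteq> v" | "a = v" "b \<noteq> u" "b \<noteq> v"
     | "b = u" "a \<noteq> u" "a \<noteq> v" | "b = v" "a \<noteq> u" "a \<noteq> v" | "a \<noteq> u" "a \<noteq> v" "b \<noteq> u" "b \<noteq> v"
    using ab by blast
  then show ?thesis
  proof cases
    case 1 then show ?thesis using uvE False by (simp add: sw_def insert_commute)
  next
    case 2 then show ?thesis using uvE False by (simp add: sw_def)
  next
    case 3 then show ?thesis using twin[of b] c False by (simp add: sw_def insert_commute)
  next
    case 4 then show ?thesis using twin[of b] c False by (simp add: sw_def insert_commute)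
  next
    case 5 then show ?thesis using twin[of a] e False by (simp add: sw_def insert_commute)
  next
    case 6 then show ?thesis using twin[of a] e False by (simp add: sw_def insert_commute)
  next
    case 7 then show ?thesis using e by (simp add: sw_def)
  qed
qed

lemma comp_sw_proper:
  assumes p: "proper_coloring T E \<kappa>" and uT: "u \<in> T" and vT: "v \<in> T"
    and ed: "\<And>a b. {a,b} \<in> E \<Longrightarrow> {sw u v a, sw u v b} \<in> E"
  shows "proper_coloring T E (\<kappa> \<circ> sw u v)"
proof -
  have 1: "w \<notin> T \<Longrightarrow> sw u v w = w" for w using uT vT by (auto simp: sw_def)
  have 2: "w \<in> T \<Longrightarrow> sw u v w \<in> T" for w using uT vT by (auto simp: sw_def)
  have a: "\<forall>w. w \<notin> T \<longrightarrow> \<kappa> w = 0" "\<forall>w\<in>T. 1 \<le> \<kappa> w" "\<forall>a b. {a, b} \<in> E \<longrightarrow> \<kappa> a \<noteq> \<kappa> b"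
    using p unfolding proper_coloring_def by blast+
  have "\<forall>w. w \<notin> T \<longrightarrow> (\<kappa> \<circ> sw u v) w = 0" using a(1) 1 by simp
  moreover have "\<forall>w\<in>T. 1 \<le> (\<kappa> \<circ> sw u v) w" using a(2) 2 by simp
  moreover have "\<forall>a b. {a, b} \<in> E \<longrightarrow> (\<kappa> \<circ> sw u v) a \<noteq> (\<kappa> \<circ> sw u v) b"
    using a(3) ed by simp
  ultimately show ?thesis unfolding proper_coloring_def by blast
qed

lemma comp_sw_ctyp:
  assumes t: "ctyp T \<kappa> \<alpha>" and uT: "u \<in> T" and vT: "v \<in> T"
  shows "ctyp T (\<kappa> \<circ> sw u v) \<alpha>"
proof -
  have 2: "w \<in> T \<Longrightarrow> sw u v w \<in> T" for w using uT vT by (auto simp: sw_def)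
  have "{w \<in> T. \<kappa> (sw u v w) = c} = sw u v ` {w \<in> T. \<kappa> w = c}" for c
  proof (rule set_eqI, rule iffI)
    fix w assume "w \<in> {w \<in> T. \<kappa> (sw u v w) = c}"
    then show "w \<in> sw u v ` {w \<in> T. \<kappa> w = c}"
      using 2 by (intro image_eqI[of _ _ "sw u v w"]) auto
  next
    fix w assume "w \<in> sw u v ` {w \<in> T. \<kappa> w = c}"
    then show "w \<in> {w \<in> T. \<kappa> (sw u v w) = c}" using 2 by auto
  qed
  then have "card {w \<in> T. \<kappa> (sw u v w) = c} = card {w \<in> T. \<kappa> w = c}" for c
    by (simp add: card_image inj_on_subset[OF inj_sw])
  then show ?thesis using t by (simp add: ctyp_def)
qed

theorem corollary2p3:
  fixes V :: "'a set" and E :: "'a set set" and K :: "'a set" and x :: 'a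
    and Si Sj Sk :: "'a set" and i j k :: nat
  assumes "simple_graph V E"
    and "is_clique V E K"
    and "x \<notin> K"
    and "x \<notin> V \<or> (x \<in> V \<and> (\<forall>v\<in>K. {x, v} \<notin> E))"
    and "\<forall>u\<in>K. \<forall>v\<in>K.
           closed_nbhd (V - {x}) (del_vertex_edges E x) u
         = closed_nbhd (V - {x}) (del_vertex_edges E x) v"
    and "Si \<subseteq> K" "card Si = i"
    and "Sj \<subseteq> K" "card Sj = j"
    and "Sk \<subseteq> K" "card Sk = k"
    and "i \<le> j" "j \<le> k"
  shows "\<forall>\<alpha>. (int i - int j) * int (chrom_coeff (insert x V) (join_edges E x Sk) \<alpha>)
            + (int j - int k) * int (chrom_coeff (insert x V) (join_edges E x Si) \<alpha>)
            + (int k - int i) * int (chrom_coeff (insert x V) (join_edges E x Sj) \<alpha>) = 0"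
proof
  fix \<alpha>
  define T where "T = insert x V"
  have finV: "finite V" using assms(1) by (simp add: simple_graph_def)
  then have finT: "finite T" by (simp add: T_def)
  have edV: "\<And>e. e \<in> E \<Longrightarrow> \<exists>a b. e = {a,b} \<and> a \<noteq> b \<and> a \<in> V \<and> b \<in> V"
    using assms(1) by (simp add: simple_graph_def)
  have noloop: "\<And>w. {w} \<notin> E"
  proof
    fix w assume "{w} \<in> E"
    then obtain a b where "{w} = {a,b}" "a \<noteq> b" using edV by blast
    then show False by (metis doubleton_eq_iff insert_absorb2)
  qed
  have inV: "{a,b} \<in> E \<Longrightarrow> a \<in> V \<and> b \<in> V" for a b
    using edV[of "{a,b}"] by (auto simp: doubleton_eq_iff)
  have KV: "K \<subseteq> V" and cl: "\<And>u v. u \<in> K \<Longrightarrow> v \<in> K \<Longrightarrow> u \<noteq> v \<Longrightarrow> {u,v} \<in> E"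
    using assms(2) by (auto simp: is_clique_def)
  have xK: "\<And>v. v \<in> K \<Longrightarrow> {x,v} \<notin> E" using assms(4) inV by blast
  have twin: "({w,u} \<in> E \<longleftrightarrow> {w,v} \<in> E)"
    if "u \<in> K" "v \<in> K" "w \<noteq> u" "w \<noteq> v" for u v w
  proof (cases "w = x")
    case True then show ?thesis using xK that by (metis insert_commute)
  next
    case False
    show ?thesis
    proof (cases "w \<in> V")
      case False then show ?thesis using inV by blast
    next
      case True
      have ux: "u \<noteq> x" "v \<noteq> x" using that assms(3) by auto
      have "w \<in> closed_nbhd (V - {x}) (del_vertex_edges E x) u \<longleftrightarrow> {w,u} \<in> E"
        using True \<open>w \<noteq> x\<close> ux that by (auto simp: closed_nbhd_def del_vertex_edges_def)
      moreover have "w \<in> closed_nbhd (V - {x}) (del_vertex_edges E x) v \<longleftrightarrow> {w,v} \<in> E"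
        using True \<open>w \<noteq> x\<close> ux that by (auto simp: closed_nbhd_def del_vertex_edges_def)
      ultimately show ?thesis using assms(5) that by metis
    qed
  qed
  define P where "P = {\<kappa>. proper_coloring T E \<kappa> \<and> ctyp T \<kappa> \<alpha>}"
  define Q where "Q u = {\<kappa> \<in> P. \<kappa> x = \<kappa> u}" for u
  have finP: "finite P" unfolding P_def using fin_col[OF finT] .
  have finQ: "finite (Q u)" for u using finP by (simp add: Q_def)
  have QP: "Q u \<subseteq> P" for u by (auto simp: Q_def)
  have Qle: "card (Q u) \<le> card (Q v)" if uK: "u \<in> K" and vK: "v \<in> K" for u v
  proof -
    have uT: "u \<in> T" "v \<in> T" using uK vK KV by (auto simp: T_def)
    have tw: "\<And>w. w \<noteq> u \<Longrightarrow> w \<noteq> v \<Longrightarrow> ({w,u} \<in> E \<longleftrightarrow> {w,v} \<in> E)"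
      using twin[OF uK vK] by blast
    have uvE: "{u,v} \<in> E \<or> u = v" using cl[OF uK vK] by blast
    have ed: "{sw u v a, sw u v b} \<in> E" if "{a,b} \<in> E" for a b
      using swap_edge[OF tw uvE noloop that] .
    have xs: "sw u v x = x" using uK vK assms(3) by (auto simp: sw_def)
    have im: "(\<lambda>\<kappa>. \<kappa> \<circ> sw u v) ` Q u \<subseteq> Q v"
    proof
      fix \<kappa>' assume "\<kappa>' \<in> (\<lambda>\<kappa>. \<kappa> \<circ> sw u v) ` Q u"
      then obtain \<kappa> where k: "\<kappa> \<in> Q u" "\<kappa>' = \<kappa> \<circ> sw u v" by blast
      have "proper_coloring T E \<kappa>'" using k comp_sw_proper[OF _ uT ed]
        by (auto simp: Q_def P_def)
      moreover have "ctyp T \<kappa>' \<alpha>" using k comp_sw_ctyp[OF _ uT]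
        by (auto simp: Q_def P_def)
      moreover have "\<kappa>' x = \<kappa>' v" using k xs by (auto simp: Q_def sw_def)
      ultimately show "\<kappa>' \<in> Q v" by (simp add: Q_def P_def)
    qed
    have ij: "inj_on (\<lambda>\<kappa>. \<kappa> \<circ> sw u v) (Q u)"
    proof (rule inj_onI)
      fix a b assume "a \<circ> sw u v = b \<circ> sw u v"
      then have "a \<circ> sw u v \<circ> sw u v = b \<circ> sw u v \<circ> sw u v" by simp
      then show "a = b" by (simp add: fun_eq_iff comp_def)
    qed
    show ?thesis by (rule card_inj_on_le[OF ij im finQ])
  qed
  define m where "m = card (Q (SOME u. u \<in> K))"
  have Qm: "card (Q u) = m" if "u \<in> K" for u
  proof -
    have s: "(SOME u. u \<in> K) \<in> K" using that by (rule someI)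
    show ?thesis unfolding m_def using Qle[OF that s] Qle[OF s that] by (rule antisym)
  qed
  have main: "int (chrom_coeff T (join_edges E x S) \<alpha>) = int (card P) - int (card S) * int m"
    if SK: "S \<subseteq> K" for S
  proof -
    have ST: "S \<subseteq> T" using SK KV by (auto simp: T_def)
    have xT: "x \<in> T" by (simp add: T_def)
    have eq: "{\<kappa>. proper_coloring T (join_edges E x S) \<kappa> \<and> (\<forall>c. card {v \<in> T. \<kappa> v = c} = \<alpha> c)}
        = P - (\<Union>u\<in>S. Q u)"
      using join_proper[OF ST xT] unfolding P_def Q_def ctyp_def by blast
    have finS: "finite S" by (rule finite_subset[OF SK finite_subset[OF KV finV]])
    have disj: "\<forall>u\<in>S. \<forall>v\<in>S. u \<noteq> v \<longrightarrow> Q u \<inter> Q v = {}"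
    proof (intro ballI impI)
      fix u v assume "u \<in> S" "v \<in> S" "u \<noteq> v"
      then have "{u,v} \<in> E" using cl SK by blast
      show "Q u \<inter> Q v = {}"
      proof (rule equals0I)
        fix \<kappa> assume "\<kappa> \<in> Q u \<inter> Q v"
        then have "proper_coloring T E \<kappa>" "\<kappa> u = \<kappa> v" by (auto simp: Q_def P_def)
        with \<open>{u,v} \<in> E\<close> show False unfolding proper_coloring_def by blast
      qed
    qed
    have cU: "card (\<Union>u\<in>S. Q u) = (\<Sum>u\<in>S. card (Q u))"
      using card_UN_disjoint[OF finS _ disj] finQ by blast
    also have "\<dots> = (\<Sum>u\<in>S. m)" by (rule sum.cong) (use Qm SK in auto)
    also have "\<dots> = card S * m" by simp
    finally have cU': "card (\<Union>u\<in>S. Q u) = card S * m" .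
    have sub: "(\<Union>u\<in>S. Q u) \<subseteq> P" using QP by blast
    have "chrom_coeff T (join_edges E x S) \<alpha> = card P - card S * m"
      unfolding chrom_coeff_def eq using card_Diff_subset[OF finite_subset[OF sub finP] sub] cU' by simp
    moreover have "card S * m \<le> card P" using cU' card_mono[OF finP sub] by simp
    ultimately show ?thesis by (simp add: of_nat_diff)
  qed
  show "(int i - int j) * int (chrom_coeff (insert x V) (join_edges E x Sk) \<alpha>)
            + (int j - int k) * int (chrom_coeff (insert x V) (join_edges E x Si) \<alpha>)
            + (int k - int i) * int (chrom_coeff (insert x V) (join_edges E x Sj) \<alpha>) = 0"
  proof -
    have e1: "int (chrom_coeff (insert x V) (join_edges E x Si) \<alpha>) = int (card P) - int i * int m"
      using main[OF assms(6)] assms(7) by (simp add: T_def)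
    have e2: "int (chrom_coeff (insert x V) (join_edges E x Sj) \<alpha>) = int (card P) - int j * int m"
      using main[OF assms(8)] assms(9) by (simp add: T_def)
    have e3: "int (chrom_coeff (insert x V) (join_edges E x Sk) \<alpha>) = int (card P) - int k * int m"
      using main[OF assms(10)] assms(11) by (simp add: T_def)
    show ?thesis unfolding e1 e2 e3 by (simp add: algebra_simps)
  qed
qed

end
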